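(* Let $\mathscr{H}$ be a finite-dimensional complex Hilbert space, let $A=\{a_k\}_{k=1}^{m}$ be a tight frame of $\mathscr{H}$ with frame bound $\alpha>0$ and $B=\{b_j\}_{j=1}^{n}$ a tight frame of $\mathscr{H}$ with frame bound $\beta>0$, and suppose that $A$ and $B$ are $s$-order incompatible. Then for every nonzero vector (pure state) $|\varphi\rangle\in\mathscr{H}$, $$n_A(|\varphi\rangle)+n_B(|\varphi\rangle)\ge s,$$ and the bound is optimal: $\min_{|\varphi\rangle\neq 0}\big(n_A(|\varphi\rangle)+n_B(|\varphi\rangle)\big)=s$.
   Context: A finite family $\{a_k\}_{k=1}^{m}\subset\mathscr{H}$ is a tight frame with frame bound $\alpha>0$ if $\sum_{k=1}^{m}|\langle x,a_k\rangle|^2=\alpha\|x\|^2$ for all $x\in\mathscr{H}$. Write $I=\{1,\dots,m\}$, $J=\{1,\dots,n\}$. The tight frames $A$ (bound $\alpha$) and $B$ (bound $\beta$) are called $s$-order incompatible, for an integer $s$, if: (1) for all nonempty $S\subseteq I$, $T\subseteq J$ with $|S|+|T|<s$ and every nonzero $x\in\mathscr{H}$, the two equalities $\sum_{k\in S}|\langle x,a_k\rangle|^2=\alpha\|x\|^2$ and $\sum_{j\in T}|\langle x,b_j\rangle|^2=\beta\|x\|^2$ do not both hold; and (2) there exist nonempty $S\subseteq I$, $T\subseteq J$ with $|S|+|T|=s$ and a nonzero $x\in\mathscr{H}$ for which both equalities hold. For a vector $|\varphi\rangle$, $n_A(|\varphi\rangle)$ is the number of indices $k$ with $\langle a_k,\varphi\rangle\neq0$,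 and $n_B(|\varphi\rangle)$ is the number of indices $j$ with $\langle b_j,\varphi\rangle\neq 0$. *)

theory Defs
  imports "HOL-Analysis.Analysis"
begin

text \<open>A finite-dimensional complex Hilbert space is modelled as \<open>complex ^ 'd\<close>
  for a finite index type \<open>'d\<close> (every such space is isometrically isomorphic to
  some \<open>\<complex>^d\<close>).\<close>

definition cinner :: "complex ^ 'd \<Rightarrow> complex ^ 'd \<Rightarrow> complex" where
  "cinner x y = (\<Sum>i\<in>UNIV. cnj (x $ i) * y $ i)"

definition tight_frame :: "(nat \<Rightarrow> complex ^ 'd) \<Rightarrow> nat \<Rightarrow> real \<Rightarrow> bool" where
  "tight_frame a m \<alpha> \<longleftrightarrow> \<alpha> > 0 \<and>
     (\<forall>x. (\<Sum>k\<in>{1..m}. (cmod (cinner x (a k)))\<^sup>2) = \<alpha> * (norm x)\<^sup>2)"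

definition s_order_incompatible ::
  "(nat \<Rightarrow> complex ^ 'd) \<Rightarrow> nat \<Rightarrow> real \<Rightarrow> (nat \<Rightarrow> complex ^ 'd) \<Rightarrow> nat \<Rightarrow> real \<Rightarrow> int \<Rightarrow> bool"
where
  "s_order_incompatible a m \<alpha> b n \<beta> s \<longleftrightarrow>
     (\<forall>S T x. S \<subseteq> {1..m} \<and> S \<noteq> {} \<and> T \<subseteq> {1..n} \<and> T \<noteq> {} \<and>
        int (card S + card T) < s \<and> x \<noteq> 0 \<longrightarrow>
        \<not> ((\<Sum>k\<in>S. (cmod (cinner x (a k)))\<^sup>2) = \<alpha> * (norm x)\<^sup>2 \<and>
           (\<Sum>j\<in>T. (cmod (cinner x (b j)))\<^sup>2) = \<beta> * (norm x)\<^sup>2)) \<and>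
     (\<exists>S T x. S \<subseteq> {1..m} \<and> S \<noteq> {} \<and> T \<subseteq> {1..n} \<and> T \<noteq> {} \<and>
        int (card S + card T) = s \<and> x \<noteq> 0 \<and>
        (\<Sum>k\<in>S. (cmod (cinner x (a k)))\<^sup>2) = \<alpha> * (norm x)\<^sup>2 \<and>
        (\<Sum>j\<in>T. (cmod (cinner x (b j)))\<^sup>2) = \<beta> * (norm x)\<^sup>2)"

definition support_count :: "(nat \<Rightarrow> complex ^ 'd) \<Rightarrow> nat \<Rightarrow> complex ^ 'd \<Rightarrow> nat" where
  "support_count a m \<phi> = card {k\<in>{1..m}. cinner (a k) \<phi> \<noteq> 0}"

end

theory Submission
  imports Defs
begin

lemma cinner_swap: "cinner y x = cnj (cinner x y)"
  unfolding cinner_def by (simp add: mult.commute)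

lemma cinner_zero_iff: "cinner y x = 0 \<longleftrightarrow> cinner x y = 0"
  by (metis cinner_swap complex_cnj_zero_iff)

lemma supp_sum:
  assumes "tight_frame a m \<alpha>"
  shows "(\<Sum>k\<in>{k\<in>{1..m}. cinner (a k) x \<noteq> 0}. (cmod (cinner x (a k)))\<^sup>2) = \<alpha> * (norm x)\<^sup>2"
proof -
  have "(\<Sum>k\<in>{k\<in>{1..m}. cinner (a k) x \<noteq> 0}. (cmod (cinner x (a k)))\<^sup>2)
      = (\<Sum>k\<in>{1..m}. (cmod (cinner x (a k)))\<^sup>2)"
    by (rule sum.mono_neutral_left) (auto simp: cinner_zero_iff)
  also have "\<dots> = \<alpha> * (norm x)\<^sup>2" using assms unfolding tight_frame_def by blast
  finally show ?thesis .
qed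

lemma supp_ne:
  assumes "tight_frame a m \<alpha>" "x \<noteq> 0"
  shows "{k\<in>{1..m}. cinner (a k) x \<noteq> 0} \<noteq> {}"
proof
  assume h: "{k\<in>{1..m}. cinner (a k) x \<noteq> 0} = {}"
  have "\<alpha> > 0" using assms(1) unfolding tight_frame_def by blast
  moreover have "norm x > 0" using assms(2) by simp
  ultimately have "\<alpha> * (norm x)\<^sup>2 > 0" by simp
  moreover have "(\<Sum>k\<in>{k\<in>{1..m}. cinner (a k) x \<noteq> 0}. (cmod (cinner x (a k)))\<^sup>2) = 0"
    by (simp only: h sum.empty)
  ultimately show False using supp_sum[OF assms(1), of x] by linarith
qed

lemma supp_sub:
  assumes "tight_frame a m \<alpha>" "S \<subseteq> {1..m}"
    and "(\<Sum>k\<in>S. (cmod (cinner x (a k)))\<^sup>2) = \<alpha> * (norm x)\<^sup>2"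
  shows "{k\<in>{1..m}. cinner (a k) x \<noteq> 0} \<subseteq> S"
proof
  fix k assume k: "k \<in> {k\<in>{1..m}. cinner (a k) x \<noteq> 0}"
  show "k \<in> S"
  proof (rule ccontr)
    assume nk: "k \<notin> S"
    have fin: "finite S" using assms(2) finite_subset by blast
    have "(\<Sum>k\<in>{1..m}. (cmod (cinner x (a k)))\<^sup>2)
        = (\<Sum>k\<in>S. (cmod (cinner x (a k)))\<^sup>2) + (\<Sum>k\<in>{1..m}-S. (cmod (cinner x (a k)))\<^sup>2)"
      using assms(2) by (metis (no_types, lifting) finite_atLeastAtMost sum.subset_diff add.commute)
    moreover have "(\<Sum>k\<in>{1..m}. (cmod (cinner x (a k)))\<^sup>2) = \<alpha> * (norm x)\<^sup>2"
      using assms(1) unfolding tight_frame_def by blast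
    ultimately have "(\<Sum>k\<in>{1..m}-S. (cmod (cinner x (a k)))\<^sup>2) = 0" using assms(3) by simp
    hence "\<forall>j\<in>{1..m}-S. (cmod (cinner x (a j)))\<^sup>2 = 0"
      by (subst (asm) sum_nonneg_eq_0_iff) auto
    with k nk have "cinner x (a k) = 0" by auto
    with k show False by (simp add: cinner_zero_iff)
  qed
qed

theorem mainTheorem2:
  fixes a b :: "nat \<Rightarrow> complex ^ 'd" and m n :: nat and \<alpha> \<beta> :: real and s :: int
  assumes "tight_frame a m \<alpha>" and "tight_frame b n \<beta>"
    and "s_order_incompatible a m \<alpha> b n \<beta> s"
  shows "(\<forall>\<phi>::complex ^ 'd. \<phi> \<noteq> 0 \<longrightarrow>
            int (support_count a m \<phi> + support_count b n \<phi>) \<ge> s)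
       \<and> int (Min {support_count a m \<phi> + support_count b n \<phi> | \<phi>::complex ^ 'd. \<phi> \<noteq> 0}) = s"
proof -
  have inc1: "\<And>S T x. S \<subseteq> {1..m} \<Longrightarrow> S \<noteq> {} \<Longrightarrow> T \<subseteq> {1..n} \<Longrightarrow> T \<noteq> {} \<Longrightarrow>
        int (card S + card T) < s \<Longrightarrow> x \<noteq> 0 \<Longrightarrow>
        (\<Sum>k\<in>S. (cmod (cinner x (a k)))\<^sup>2) = \<alpha> * (norm x)\<^sup>2 \<Longrightarrow>
           (\<Sum>j\<in>T. (cmod (cinner x (b j)))\<^sup>2) = \<beta> * (norm x)\<^sup>2 \<Longrightarrow> False"
    using assms(3) unfolding s_order_incompatible_def by blast
  obtain S T x where ST: "S \<subseteq> {1..m}" "S \<noteq> {}" "T \<subseteq> {1..n}" "T \<noteq> {}"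
        "int (card S + card T) = s" "x \<noteq> 0"
        "(\<Sum>k\<in>S. (cmod (cinner x (a k)))\<^sup>2) = \<alpha> * (norm x)\<^sup>2"
        "(\<Sum>j\<in>T. (cmod (cinner x (b j)))\<^sup>2) = \<beta> * (norm x)\<^sup>2"
    using assms(3) unfolding s_order_incompatible_def by blast
  have P1: "\<forall>\<phi>::complex ^ 'd. \<phi> \<noteq> 0 \<longrightarrow>
            int (support_count a m \<phi> + support_count b n \<phi>) \<ge> s"
  proof (intro allI impI)
    fix \<phi> :: "complex ^ 'd" assume "\<phi> \<noteq> 0"
    show "int (support_count a m \<phi> + support_count b n \<phi>) \<ge> s"
    proof (rule ccontr)
      assume "\<not> ?thesis"
      hence lt: "int (card {k\<in>{1..m}. cinner (a k) \<phi> \<noteq> 0} + card {k\<in>{1..n}. cinner (b k) \<phi> \<noteq> 0}) < s"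
        unfolding support_count_def by simp
      have s1: "{k\<in>{1..m}. cinner (a k) \<phi> \<noteq> 0} \<subseteq> {1..m}" by blast
      have s2: "{k\<in>{1..n}. cinner (b k) \<phi> \<noteq> 0} \<subseteq> {1..n}" by blast
      show False
        using inc1[of "{k\<in>{1..m}. cinner (a k) \<phi> \<noteq> 0}" "{k\<in>{1..n}. cinner (b k) \<phi> \<noteq> 0}" \<phi>,
           OF _ supp_ne[OF assms(1) \<open>\<phi> \<noteq> 0\<close>] _ supp_ne[OF assms(2) \<open>\<phi> \<noteq> 0\<close>] _ \<open>\<phi> \<noteq> 0\<close>
              supp_sum[OF assms(1)] supp_sum[OF assms(2)]] s1 s2 lt by blast
    qed
  qed
  let ?M = "{support_count a m \<phi> + support_count b n \<phi> | \<phi>::complex ^ 'd. \<phi> \<noteq> 0}"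
  have le: "support_count a m x + support_count b n x \<le> card S + card T"
  proof -
    have "support_count a m x \<le> card S"
      unfolding support_count_def
      by (rule card_mono) (use ST(1) finite_subset supp_sub[OF assms(1) ST(1) ST(7)] in auto)
    moreover have "support_count b n x \<le> card T"
      unfolding support_count_def
      by (rule card_mono) (use ST(3) finite_subset supp_sub[OF assms(2) ST(3) ST(8)] in auto)
    ultimately show ?thesis by simp
  qed
  have xin: "support_count a m x + support_count b n x \<in> ?M" using ST(6) by blast
  have fin: "finite ?M"
  proof (rule finite_subset[of _ "{..m+n}"])
    show "?M \<subseteq> {..m+n}"
    proof
      fix v assume "v \<in> ?M"
      then obtain \<phi> where v: "v = support_count a m \<phi> + support_count b n \<phi>" by blast
      have "support_count a m \<phi> \<le> m" unfolding support_count_def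
        by (metis (no_types, lifting) card_atLeastAtMost card_mono finite_atLeastAtMost mem_Collect_eq subsetI diff_Suc_1)
      moreover have "support_count b n \<phi> \<le> n" unfolding support_count_def
        by (metis (no_types, lifting) card_atLeastAtMost card_mono finite_atLeastAtMost mem_Collect_eq subsetI diff_Suc_1)
      ultimately show "v \<in> {..m+n}" using v by simp
    qed
  qed simp
  have "Min ?M \<le> support_count a m x + support_count b n x" using fin xin by (rule Min_le)
  moreover have "Min ?M \<in> ?M" using fin xin by (intro Min_in) auto
  ultimately have "int (Min ?M) = s" using P1 le ST(5) by fastforce
  with P1 show ?thesis by blast
qed

end
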